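(* Let $\sigma>1$ and $a>0$ with $\sigma e^{-a}>1$. Define a sequence $(\rho^*_k)_{k\ge0}$ by the recurrence $$\rho^*_0=\frac{\sigma e^{-a}-1}{\sigma-1},\qquad \rho^*_k=\frac{e^{-a}}{(\sigma-1)\rho^*_0+1-e^{-a}}\Big(\sigma\frac{a^k}{k!}\rho^*_0+\sum_{l=1}^{k-1}\frac{a^{k-l}}{(k-l)!}\rho^*_l\Big),\quad k\ge1.$$ Then its generating function is $\sum_{k\ge0}\rho^*_kX^k=(\sigma e^{-a}-1)\dfrac{e^{aX}}{\sigma-e^{aX}}$, and for every $k\ge0$ $$\rho^*_k=(\sigma e^{-a}-1)\frac{a^k}{k!}\sum_{i\ge1}\frac{i^k}{\sigma^i}.$$ Moreover $\sum_{k\ge0}\rho^*_k=1$, so $(\rho^*_k)_{k\ge0}$ is a probability distribution on $\mathbb N$, whose expectation and variance are $$\frac{\sigma a e^{-a}}{\sigma e^{-a}-1}\qquad\text{and}\qquad \frac{\sigma a e^{-a}(\sigma e^{-a}+a-1)}{(\sigma e^{-a}-1)^2}.$$ *)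

theory Defs
  imports "HOL-Analysis.Analysis" "HOL-Computational_Algebra.Formal_Power_Series"
begin

end

theory Submission
  imports Defs
begin


lemma swap_nonneg:
  fixes f :: "nat \<Rightarrow> nat \<Rightarrow> real"
  assumes nn: "\<And>k i. f k i \<ge> 0" and inner: "\<And>i. (\<lambda>k. f k i) sums u i" and outer: "u sums s"
  shows "(\<lambda>k. \<Sum>i. f k i) sums s" and "summable (f k)"
proof -
  have hi: "((\<lambda>k. f k i) has_sum u i) UNIV" for i
    by (rule sums_nonneg_imp_has_sum[OF inner nn])
  have un: "u i \<ge> 0" for i using sums_le[of "\<lambda>_. 0" "\<lambda>k. f k i" 0 "u i"] inner nn by auto
  have hu: "(u has_sum s) UNIV" by (rule sums_nonneg_imp_has_sum[OF outer un])
  let ?F = "\<lambda>(i,k). f k i"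
  have sF: "?F summable_on (UNIV \<times> UNIV)"
    apply (rule summable_on_SigmaI[where g=u])
    using hi hu nn by (auto simp: summable_on_def)
  have hF: "(?F has_sum s) (UNIV \<times> UNIV)"
    apply (rule has_sum_SigmaI[where g=u])
    using hi hu sF by auto
  hence hG: "((\<lambda>(k,i). f k i) has_sum s) (UNIV \<times> UNIV)"
    by (subst has_sum_swap) simp
  have sk: "f k summable_on UNIV" for k
    using summable_on_SigmaD1[of "\<lambda>k i. f k i" UNIV "\<lambda>_. UNIV" k] hG
    by (auto simp: summable_on_def)
  thus "summable (f k)" using summable_on_UNIV_nonneg_real_iff nn by blast
  have "((\<lambda>k. infsum (f k) UNIV) has_sum s) UNIV"
    apply (rule has_sum_Sigma'[OF hG[unfolded case_prod_unfold]])
    using sk by (simp add: has_sum_infsum)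
  moreover have "infsum (f k) UNIV = (\<Sum>i. f k i)" for k
    using sk[of k] by (metis has_sum_imp_sums has_sum_infsum sums_unique)
  ultimately show "(\<lambda>k. \<Sum>i. f k i) sums s"
    by (metis (no_types, lifting) ext has_sum_imp_sums)
qed



lemma E0: "(\<lambda>k. x^k / fact k) sums exp (x::real)"
  using exp_converges[of x] by (simp add: divide_inverse mult.commute)

lemma E1: "(\<lambda>k. real k * x^k / fact k) sums (x * exp (x::real))"
proof -
  have "(\<lambda>k. x * (x^k / fact k)) sums (x * exp x)" by (rule sums_mult[OF E0])
  moreover have "x * (x^k / fact k) = real (Suc k) * x^(Suc k) / fact (Suc k)" for k
    by (simp add: field_simps del: of_nat_Suc)
  ultimately have "(\<lambda>k. real (Suc k) * x^(Suc k) / fact (Suc k)) sums (x * exp x)" by simp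
  from sums_Suc[OF this] show ?thesis by simp
qed

lemma E2: "(\<lambda>k. (real k)^2 * x^k / fact k) sums (x * (x + 1) * exp (x::real))"
proof -
  have "(\<lambda>k. x * (real k * x^k / fact k + x^k / fact k)) sums (x * (x * exp x + exp x))"
    by (rule sums_mult[OF sums_add[OF E1 E0]])
  moreover have "x * (real k * x^k / fact k + x^k / fact k) = (real (Suc k))^2 * x^(Suc k) / fact (Suc k)" for k
    by (simp add: field_simps power2_eq_square del: of_nat_Suc) (simp add: algebra_simps)
  ultimately have "(\<lambda>k. (real (Suc k))^2 * x^(Suc k) / fact (Suc k)) sums (x * (x + 1) * exp x)"
    by (simp add: algebra_simps)
  from sums_Suc[OF this] show ?thesis by simp
qed

lemma aux: "(r::real) \<noteq> 0 \<Longrightarrow> (0 * r^2 - 1 * (of_nat 2 * ((0 - 1) * r^(2-Suc 0)))) / (r^2*r^2) = 2 / r^3"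
  by (simp add: field_simps eval_nat_numeral)

lemma G1: assumes "0 \<le> q" "q < (1::real)" shows "(\<lambda>n. real n * q^n) sums (q / (1-q)^2)"
proof -
  have "(\<lambda>n. q * (of_nat (Suc n) * q ^ n)) sums (q * (1 / (1 - q)^2))"
    by (rule sums_mult[OF geometric_deriv_sums]) (use assms in auto)
  hence "(\<lambda>n. real (Suc n) * q ^ Suc n) sums (q / (1 - q)^2)" by (simp add: algebra_simps)
  from sums_Suc[OF this] show ?thesis by simp
qed

lemma G2: assumes "0 \<le> q" "q < (1::real)" shows "(\<lambda>n. (real n)^2 * q^n) sums (q * (1 + q) / (1-q)^3)"
proof -
  have d: "(\<lambda>n. diffs (\<lambda>n. of_nat (Suc n)) n * q ^ n) sums (2 / (1-q)^3)"
  proof (rule termdiffs_sums_strong[where K=1 and f="\<lambda>z. 1 / (1-z)^2"])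
    fix z :: real assume "norm z < 1"
    thus "(\<lambda>n. of_nat (Suc n) * z ^ n) sums (1 / (1 - z)^2)" by (rule geometric_deriv_sums)
  next
    show "((\<lambda>z. 1 / (1 - z)^2) has_field_derivative 2 / (1 - q) ^ 3) (at q)"
    proof -
      have q: "1 - q \<noteq> 0" using assms by auto
      have "((\<lambda>z. 1 / (1 - z)^2) has_field_derivative ((0 * (1-q)^2 - 1 * (of_nat 2 * ((0 - 1) * (1-q)^(2-Suc 0)))) / ((1-q)^2*(1-q)^2))) (at q)"
        by (intro DERIV_divide DERIV_power DERIV_diff DERIV_const DERIV_ident) (use q in simp)
      then show ?thesis
        by (simp only: aux[OF q])
    qed
  qed (use assms in auto)
  have "(\<lambda>n. diffs (\<lambda>n. of_nat (Suc n)) n * q ^ n - of_nat (Suc n) * q ^ n) sums (2 / (1-q)^3 - 1 / (1-q)^2)"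
    by (rule sums_diff[OF d geometric_deriv_sums]) (use assms in auto)
  moreover have "diffs (\<lambda>n. of_nat (Suc n)) n * q ^ n - of_nat (Suc n) * q ^ n = (real (Suc n))^2 * q^n" for n
    by (simp add: diffs_def algebra_simps power2_eq_square)
  moreover have "2 / (1-q)^3 - 1 / (1-q)^2 = (1 + q) / (1 - q)^3"
  proof -
    have r: "1 - q \<noteq> 0" using assms by auto
    have "\<And>r::real. r \<noteq> 0 \<Longrightarrow> 2 / r^3 - 1 / r^2 = (2 - r) / r^3"
      by (simp add: field_simps eval_nat_numeral)
    from this[OF r] show ?thesis by simp
  qed
  ultimately have "(\<lambda>n. (real (Suc n))^2 * q^n) sums ((1 + q) / (1 - q)^3)" by simp
  hence "(\<lambda>n. q * ((real (Suc n))^2 * q^n)) sums (q * ((1 + q) / (1 - q)^3))" by (rule sums_mult)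
  hence "(\<lambda>n. (real (Suc n))^2 * q^Suc n) sums (q * (1 + q) / (1 - q)^3)" by (simp add: algebra_simps)
  from sums_Suc[OF this] show ?thesis by simp
qed



lemma L1: "(d::real) > 0 \<Longrightarrow> e > 0 \<Longrightarrow> d*a*((1/e)/(d/e)^2) = a*e/d"
  by (simp add: field_simps power2_eq_square)
lemma L2: "(d::real) > 0 \<Longrightarrow> e > 0 \<Longrightarrow> d*a^2*((1/e)*(1+1/e)/(d/e)^3) = a^2*e*(e+1)/d^2"
  by (simp add: field_simps power2_eq_square power3_eq_cube)
lemma L3: "(d::real) > 0 \<Longrightarrow> a*(d+1)/d + a^2*(d+1)*(d+1+1)/d^2 - 2*(a*(d+1)/d)*(a*(d+1)/d) + (a*(d+1)/d)^2*1 = (d+1)*a*((d+1)+a-1)/d^2"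
  by (simp add: field_simps power2_eq_square)

lemma ek_mult: "l \<le> k \<Longrightarrow> (a::real)^(k-l) / fact (k-l) * (a^l / fact l) = a^k / fact k * real (k choose l)"
  by (simp add: binomial_fact field_simps power_add[symmetric])

theorem mainTheorem2:
  fixes \<sigma> a :: real and \<rho> :: "nat \<Rightarrow> real"
  assumes "\<sigma> > 1" and "a > 0" and "\<sigma> * exp (-a) > 1"
    and rho0: "\<rho> 0 = (\<sigma> * exp (-a) - 1) / (\<sigma> - 1)"
    and rhok: "\<And>k. k \<ge> 1 \<Longrightarrow> \<rho> k =
        exp (-a) / ((\<sigma> - 1) * \<rho> 0 + 1 - exp (-a)) *
        (\<sigma> * (a ^ k / fact k) * \<rho> 0 + (\<Sum>l = 1..k-1. a ^ (k - l) / fact (k - l) * \<rho> l))"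
  shows "(Abs_fps \<rho> = fps_const (\<sigma> * exp (-a) - 1) * fps_exp a / (fps_const \<sigma> - fps_exp a)) \<and>
    (\<forall>k. \<rho> k = (\<sigma> * exp (-a) - 1) * (a ^ k / fact k) *
                      (\<Sum>i. real (Suc i) ^ k / \<sigma> ^ Suc i)) \<and>
    (\<forall>k. \<rho> k \<ge> 0) \<and>
    \<rho> sums 1 \<and>
    (\<lambda>k. real k * \<rho> k) sums (\<sigma> * a * exp (-a) / (\<sigma> * exp (-a) - 1)) \<and>
    (\<lambda>k. (real k - \<sigma> * a * exp (-a) / (\<sigma> * exp (-a) - 1))\<^sup>2 * \<rho> k) sums
           (\<sigma> * a * exp (-a) * (\<sigma> * exp (-a) + a - 1) / (\<sigma> * exp (-a) - 1)\<^sup>2)"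
proof -
  define s where "s = \<sigma> * exp (-a)"
  define c where "c = s - 1"
  define q where "q = 1 / s"
  define ek where "ek k = a^k / fact k" for k
  define g where "g k i = real (Suc i) ^ k / \<sigma> ^ Suc i" for k i
  define S where "S k = (\<Sum>i. g k i)" for k
  define r where "r k = c * ek k * S k" for k
  define f where "f k i = c * ek k * g k i" for k i
  have s1: "s > 1" using assms s_def by simp
  have c0: "c > 0" using s1 c_def by simp
  have q0: "0 \<le> q" "q < 1" using s1 q_def by auto
  have sig0: "\<sigma> > 0" using assms by simp
  have s0: "s > 0" and qc: "1 - q = c / s" and sc: "s = c + 1" using s1 unfolding q_def c_def by (auto simp: field_simps)
  have ek0: "ek k > 0" for k unfolding ek_def using assms by simp
  have g0: "g k i \<ge> 0" for k i unfolding g_def using sig0 by simp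
  have f0: "f k i \<ge> 0" for k i unfolding f_def using c0 ek0[of k] g0[of k i] by simp
  have Eq: "exp (a * real n) / \<sigma> ^ n = q ^ n" for n
  proof -
    have "exp (a * real n) = exp a ^ n" by (metis exp_of_nat_mult mult.commute)
    moreover have "exp a / \<sigma> = q" unfolding q_def s_def using sig0
      by (simp add: exp_minus field_simps)
    ultimately show ?thesis by (metis power_divide)
  qed
  have fx: "f k i = (a * real (Suc i))^k / fact k * (c / \<sigma> ^ Suc i)" for k i
    unfolding f_def ek_def g_def by (simp add: power_mult_distrib)
  have inner0: "(\<lambda>k. f k i) sums (c * q ^ Suc i)" for i
  proof -
    have "(\<lambda>k. (a * real (Suc i))^k / fact k * (c / \<sigma> ^ Suc i)) sums (exp (a * real (Suc i)) * (c / \<sigma> ^ Suc i))"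
      by (rule sums_mult2[OF E0])
    moreover have "exp (a * real (Suc i)) * (c / \<sigma> ^ Suc i) = c * q ^ Suc i"
      by (subst Eq[symmetric]) (simp add: field_simps del: of_nat_Suc)
    ultimately show ?thesis by (simp add: fx)
  qed
  have outer0: "(\<lambda>i. c * q ^ Suc i) sums 1"
  proof -
    have "(\<lambda>i. c * q * q ^ i) sums (c * q * (1 / (1 - q)))"
      by (rule sums_mult[OF geometric_sums]) (use q0 in auto)
    moreover have "c * q * (1 / (1 - q)) = 1" unfolding c_def q_def using s1 by (simp add: field_simps)
    ultimately have "(\<lambda>i. c * q * q ^ i) sums 1" by metis
    thus ?thesis by (simp add: algebra_simps)
  qed
  have sumf: "summable (f k)" for k by (rule swap_nonneg(2)[OF f0 inner0 outer0])
  have sumg: "summable (g k)" for k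
  proof -
    have "summable (\<lambda>i. (c * ek k) * g k i)" using sumf[of k] unfolding f_def by simp
    thus ?thesis using c0 ek0[of k] by (simp add: summable_cmult_iff)
  qed
  have sf: "(\<Sum>i. f k i) = r k" for k
    unfolding f_def r_def S_def using sumg[of k] by (simp add: suminf_mult)
  have r_sums: "r sums 1"
    using swap_nonneg(1)[OF f0 inner0 outer0] by (simp add: sf)
  have rnn: "r k \<ge> 0" for k
    unfolding r_def S_def using c0 ek0[of k] suminf_nonneg[OF sumg g0] by simp
  define B where "B = fps_const \<sigma> - fps_exp a"
  have convB: "fps_nth (Abs_fps x * B) k = \<sigma> * x k - (\<Sum>l=0..k. x l * ek (k - l))" for x k
    unfolding B_def ek_def by (simp add: algebra_simps fps_mult_nth mult_delta_right sum.delta sum.delta')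
  have rhs: "fps_nth (fps_const c * fps_exp a) k = c * ek k" for k unfolding ek_def by simp
  have D: "(\<sigma> - 1) * \<rho> 0 + 1 - exp (-a) = (\<sigma> - 1) * exp (-a)"
    using rho0 assms(1) by (simp add: field_simps)
  have rec: "(\<sigma> - 1) * \<rho> k = \<sigma> * ek k * \<rho> 0 + (\<Sum>l=1..k-1. ek (k-l) * \<rho> l)" if "k \<ge> 1" for k
  proof -
    have e: "exp (-a) / ((\<sigma> - 1) * exp (-a)) = 1 / (\<sigma> - 1)" by simp
    have "\<rho> k = 1 / (\<sigma> - 1) * (\<sigma> * ek k * \<rho> 0 + (\<Sum>l=1..k-1. ek (k-l) * \<rho> l))"
      using rhok[OF that] unfolding D e ek_def by simp
    thus ?thesis using assms(1) by simp
  qed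
  have rhoB: "Abs_fps \<rho> * B = fps_const c * fps_exp a"
  proof (rule fps_ext)
    fix k
    show "fps_nth (Abs_fps \<rho> * B) k = fps_nth (fps_const c * fps_exp a) k"
    proof (cases k)
      case 0
      then show ?thesis unfolding convB rhs using rho0 assms(1) by (simp add: ek_def c_def s_def field_simps)
    next
      case (Suc m)
      let ?T = "\<Sum>l=1..m. ek (k-l) * \<rho> l"
      have h1: "(\<sigma> - 1) * \<rho> k = \<sigma> * ek k * \<rho> 0 + ?T" using rec[of k] Suc by simp
      have h2: "(\<Sum>l=0..k. \<rho> l * ek (k - l)) = \<rho> k + \<rho> 0 * ek k + ?T"
        unfolding Suc by (simp add: sum.atLeast0_atMost_Suc sum.atLeast_Suc_atMost[of 0 m] ek_def mult.commute)
      have h3: "(\<sigma> - 1) * \<rho> 0 = c" using rho0 assms(1) unfolding c_def s_def by simp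
      have h4: "c * ek k = \<sigma> * ek k * \<rho> 0 - \<rho> 0 * ek k" by (simp add: h3[symmetric] algebra_simps)
      have "\<sigma> * \<rho> k - (\<Sum>l=0..k. \<rho> l * ek (k - l)) = c * ek k"
        unfolding h2 h4 using h1 by (simp add: algebra_simps)
      then show ?thesis unfolding convB rhs .
    qed
  qed
  have rB: "Abs_fps r * B = fps_const c * fps_exp a"
  proof (rule fps_ext)
    fix k
    have gS: "(\<lambda>i. g k (Suc i)) sums (S k - 1 / \<sigma>)"
      using sums_Suc_iff[of "g k" "S k - 1/\<sigma>"] summable_sums[OF sumg[of k]] unfolding S_def
      by (simp add: g_def)
    have "(\<lambda>i. \<Sum>l=0..k. ek (k-l) * c * ek l * g l i) sums (\<Sum>l=0..k. ek (k-l) * c * ek l * S l)"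
      by (intro sums_sum sums_mult summable_sums, unfold S_def) (use sumg in \<open>auto simp: summable_sums\<close>)
    moreover have "(\<Sum>l=0..k. ek (k-l) * c * ek l * g l i) = c * ek k * \<sigma> * g k (Suc i)" for i
    proof -
      have "(\<Sum>l=0..k. ek (k-l) * c * ek l * g l i) = (\<Sum>l=0..k. c * ek k / \<sigma> ^ Suc i * (real (k choose l) * real (Suc i) ^ l * 1 ^ (k - l)))"
      proof (rule sum.cong[OF refl])
        fix l assume "l \<in> {0..k}"
        hence lk: "l \<le> k" by simp
        have em: "ek (k-l) * ek l = ek k * real (k choose l)" unfolding ek_def by (rule ek_mult[OF lk])
        have "ek (k-l) * c * ek l * g l i = c * (ek (k-l) * ek l) * g l i" by (simp add: ac_simps)
        also have "\<dots> = c * (ek k * real (k choose l)) * g l i" by (simp only: em)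
        also have "\<dots> = c * ek k / \<sigma> ^ Suc i * (real (k choose l) * real (Suc i) ^ l * 1 ^ (k - l))"
          unfolding g_def by (simp add: field_simps del: of_nat_Suc)
        finally show "ek (k-l) * c * ek l * g l i = c * ek k / \<sigma> ^ Suc i * (real (k choose l) * real (Suc i) ^ l * 1 ^ (k - l))" .
      qed
      also have "\<dots> = c * ek k / \<sigma> ^ Suc i * (\<Sum>l=0..k. real (k choose l) * real (Suc i) ^ l * 1 ^ (k - l))"
        by (simp only: sum_distrib_left)
      also have "\<dots> = c * ek k / \<sigma> ^ Suc i * (real (Suc i) + 1) ^ k"
        by (subst binomial_ring) (simp only: atLeast0AtMost)
      also have "\<dots> = c * ek k * \<sigma> * g k (Suc i)"
        unfolding g_def using sig0 by (simp add: field_simps)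
      finally show ?thesis .
    qed
    ultimately have "(\<lambda>i. c * ek k * \<sigma> * g k (Suc i)) sums (\<Sum>l=0..k. ek (k-l) * c * ek l * S l)" by simp
    moreover have "(\<lambda>i. c * ek k * \<sigma> * g k (Suc i)) sums (c * ek k * \<sigma> * (S k - 1 / \<sigma>))"
      by (rule sums_mult[OF gS])
    ultimately have "(\<Sum>l=0..k. ek (k-l) * c * ek l * S l) = c * ek k * \<sigma> * (S k - 1 / \<sigma>)"
      using sums_unique2 by blast
    moreover have "(\<Sum>l=0..k. r l * ek (k - l)) = (\<Sum>l=0..k. ek (k-l) * c * ek l * S l)"
      unfolding r_def by (simp add: ac_simps)
    moreover have "c * ek k * \<sigma> * (S k - 1 / \<sigma>) = \<sigma> * (c * ek k * S k) - c * ek k"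
      using sig0 by (simp add: algebra_simps)
    ultimately have "(\<Sum>l=0..k. r l * ek (k - l)) = \<sigma> * (c * ek k * S k) - c * ek k" by simp
    thus "fps_nth (Abs_fps r * B) k = fps_nth (fps_const c * fps_exp a) k"
      unfolding convB rhs by (simp add: r_def)
  qed
  have B0: "B \<noteq> 0"
  proof
    assume "B = 0"
    hence "fps_nth B 0 = 0" by simp
    thus False unfolding B_def using assms(1) by simp
  qed
  have "Abs_fps \<rho> = Abs_fps r" using rhoB rB B0 by (metis mult_right_cancel)
  hence rr: "\<rho> = r" by (metis fps_nth_Abs_fps ext)
  have claim1: "Abs_fps \<rho> = fps_const (\<sigma> * exp (-a) - 1) * fps_exp a / (fps_const \<sigma> - fps_exp a)"
    using rhoB B0 unfolding B_def c_def s_def by (metis nonzero_mult_div_cancel_right)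
  define \<mu> where "\<mu> = a * s / c"
  define f1 where "f1 k i = real k * f k i" for k i
  have inner1: "(\<lambda>k. f1 k i) sums (c * a * (real (Suc i) * q ^ Suc i))" for i
  proof -
    have "(\<lambda>k. real k * (a * real (Suc i))^k / fact k * (c / \<sigma> ^ Suc i)) sums ((a * real (Suc i)) * exp (a * real (Suc i)) * (c / \<sigma> ^ Suc i))"
      by (rule sums_mult2[OF E1])
    moreover have "(a * real (Suc i)) * exp (a * real (Suc i)) * (c / \<sigma> ^ Suc i) = c * a * (real (Suc i) * q ^ Suc i)"
      by (subst Eq[symmetric]) (simp add: field_simps del: of_nat_Suc)
    ultimately show ?thesis by (simp add: fx f1_def mult.assoc)
  qed
  have outer1: "(\<lambda>i. c * a * (real (Suc i) * q ^ Suc i)) sums \<mu>"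
  proof -
    have "(\<lambda>i. real (Suc i) * q ^ Suc i) sums (q / (1-q)^2)"
      using sums_Suc_iff[of "\<lambda>n. real n * q^n"] G1[OF q0] by simp
    hence "(\<lambda>i. c * a * (real (Suc i) * q ^ Suc i)) sums (c * a * (q / (1-q)^2))" by (rule sums_mult)
    moreover have "c * a * (q / (1-q)^2) = \<mu>" unfolding \<mu>_def qc using L1[OF c0 s0, of a] q_def by simp
    ultimately show ?thesis by metis
  qed
  have f10: "f1 k i \<ge> 0" for k i unfolding f1_def using f0 by simp
  have m1: "(\<lambda>k. real k * r k) sums \<mu>"
  proof -
    have "(\<lambda>k. \<Sum>i. f1 k i) sums \<mu>" by (rule swap_nonneg(1)[OF f10 inner1 outer1])
    moreover have "(\<Sum>i. f1 k i) = real k * r k" for k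
      unfolding f1_def using sumf[of k] sf[of k] by (simp add: suminf_mult)
    ultimately show ?thesis by simp
  qed
  define M2 where "M2 = a * s / c + a^2 * s * (s + 1) / c^2"
  define f2 where "f2 k i = (real k)^2 * f k i" for k i
  have inner2: "(\<lambda>k. f2 k i) sums (c * a^2 * ((real (Suc i))^2 * q ^ Suc i) + c * a * (real (Suc i) * q ^ Suc i))" for i
  proof -
    have "(\<lambda>k. (real k)^2 * (a * real (Suc i))^k / fact k * (c / \<sigma> ^ Suc i)) sums ((a * real (Suc i)) * (a * real (Suc i) + 1) * exp (a * real (Suc i)) * (c / \<sigma> ^ Suc i))"
      by (rule sums_mult2[OF E2])
    moreover have "(a * real (Suc i)) * (a * real (Suc i) + 1) * exp (a * real (Suc i)) * (c / \<sigma> ^ Suc i) = c * a^2 * ((real (Suc i))^2 * q ^ Suc i) + c * a * (real (Suc i) * q ^ Suc i)"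
      by (subst Eq[symmetric])+ (simp add: field_simps power2_eq_square del: of_nat_Suc, simp add: add_divide_distrib)
    ultimately show ?thesis by (simp add: fx f2_def mult.assoc)
  qed
  have outer2: "(\<lambda>i. c * a^2 * ((real (Suc i))^2 * q ^ Suc i) + c * a * (real (Suc i) * q ^ Suc i)) sums M2"
  proof -
    have "(\<lambda>i. (real (Suc i))^2 * q ^ Suc i) sums (q * (1 + q) / (1-q)^3)"
      using sums_Suc_iff[of "\<lambda>n. (real n)^2 * q^n"] G2[OF q0] by simp
    hence "(\<lambda>i. c * a^2 * ((real (Suc i))^2 * q ^ Suc i) + c * a * (real (Suc i) * q ^ Suc i)) sums (c * a^2 * (q * (1 + q) / (1-q)^3) + \<mu>)"
      by (intro sums_add outer1 sums_mult)
    moreover have "c * a^2 * (q * (1 + q) / (1-q)^3) + \<mu> = M2"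
      unfolding M2_def qc using L2[OF c0 s0, of a] q_def \<mu>_def by simp
    ultimately show ?thesis by metis
  qed
  have f20: "f2 k i \<ge> 0" for k i unfolding f2_def using f0 by simp
  have m2: "(\<lambda>k. (real k)^2 * r k) sums M2"
  proof -
    have "(\<lambda>k. \<Sum>i. f2 k i) sums M2" by (rule swap_nonneg(1)[OF f20 inner2 outer2])
    moreover have "(\<Sum>i. f2 k i) = (real k)^2 * r k" for k
      unfolding f2_def using sumf[of k] sf[of k] by (simp add: suminf_mult)
    ultimately show ?thesis by simp
  qed
  have var: "(\<lambda>k. (real k - \<mu>)^2 * r k) sums (M2 - 2 * \<mu> * \<mu> + \<mu>^2 * 1)"
  proof -
    have "(\<lambda>k. (real k)^2 * r k - 2 * \<mu> * (real k * r k) + \<mu>^2 * r k) sums (M2 - 2 * \<mu> * \<mu> + \<mu>^2 * 1)"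
      by (intro sums_add sums_diff sums_mult m1 m2 r_sums)
    thus ?thesis by (simp add: power2_eq_square algebra_simps)
  qed
  have muE: "\<sigma> * a * exp (-a) / (\<sigma> * exp (-a) - 1) = \<mu>" unfolding \<mu>_def c_def s_def by simp
  have varE: "M2 - 2 * \<mu> * \<mu> + \<mu>^2 * 1 = \<sigma> * a * exp (-a) * (\<sigma> * exp (-a) + a - 1) / (\<sigma> * exp (-a) - 1)\<^sup>2"
  proof -
    have "M2 - 2 * \<mu> * \<mu> + \<mu>^2 * 1 = s * a * (s + a - 1) / c^2"
      unfolding M2_def \<mu>_def sc using L3[OF c0, of a] by simp
    thus ?thesis unfolding c_def s_def by (simp add: mult.commute mult.left_commute)
  qed
  show ?thesis
    using claim1 rr rnn r_sums m1 var muE varE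
    unfolding r_def c_def s_def ek_def S_def g_def by simp
qed

end
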